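(* Let $A,B\in\mathbb{C}^{n\times n}$ be sectorial. Then $I+AB$ is invertible if there exists $\theta\in[0,\pi)\cap\Psi(A)$ such that $$\gamma_\theta(A)\,\bar\sigma(B)<1\quad\text{and}\quad\Psi(B)\subset(-\pi+\theta,\ \pi-\theta).$$
   Context: $\bar\sigma$: largest singular value. $A$ is sectorial if $0\notin\{x^*Ax:\|x\|=1\}$; then $A=T^*DT$, $T$ nonsingular, $D$ diagonal unitary, and the phases $\bar\phi(A)\ge\dots\ge\underline\phi(A)$ are the arguments of the diagonal entries of $D$ with $\bar\phi-\underline\phi<\pi$ and $(\bar\phi+\underline\phi)/2\in(-\pi,\pi]$; $\Psi(A)=[\underline\phi(A),\bar\phi(A)]$. $\mathcal{DW}(A)=\{(\mathrm{Re}\,x^*Ax,\mathrm{Im}\,x^*Ax,\|Ax\|^2):\|x\|=1\}$. For sectorial $A$ and $\theta\in[0,\pi)\cap\Psi(A)$: $\mathcal{R}_{\ge\theta}(A)=\{h\ge0:\exists z\in\mathbb{C},\ \angle z\notin(-\theta,\theta),\ (\mathrm{Re}\,z,\mathrm{Im}\,z,h^2)\in\mathcal{DW}(A)\}$ ($\angle z\in(-\pi,\pi]$) and $\gamma_\theta(A)=\max\mathcal{R}_{\ge\theta}(A)$. *)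

theory Defs
  imports "HOL-Analysis.Analysis"
begin

type_synonym 'n cmat = "complex^'n^'n"

definition cadj :: "'n::finite cmat \<Rightarrow> 'n cmat" where
  "cadj T = (\<chi> i j. cnj (T $ j $ i))"

definition cdiag :: "('n::finite \<Rightarrow> complex) \<Rightarrow> 'n cmat" where
  "cdiag d = (\<chi> i j. if i = j then d i else 0)"

definition cinner :: "complex^'n::finite \<Rightarrow> complex^'n \<Rightarrow> complex" where
  "cinner x y = (\<Sum>i\<in>UNIV. cnj (x $ i) * y $ i)"

definition num_range :: "'n::finite cmat \<Rightarrow> complex set" where
  "num_range A = {cinner x (A *v x) | x. norm x = 1}"

definition sectorial :: "'n::finite cmat \<Rightarrow> bool" where
  "sectorial A \<longleftrightarrow> 0 \<notin> num_range A"

text \<open>Largest singular value = spectral (operator 2-) norm.\<close>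
definition sigma_max :: "'n::finite cmat \<Rightarrow> real" where
  "sigma_max B = onorm (\<lambda>x. B *v x)"

definition sect_decomp_phases :: "'n::finite cmat \<Rightarrow> real \<Rightarrow> real \<Rightarrow> bool" where
  "sect_decomp_phases A lo hi \<longleftrightarrow>
     (\<exists>T (phi :: 'n \<Rightarrow> real).
        invertible T \<and> A = cadj T ** cdiag (\<lambda>k. cis (phi k)) ** T \<and>
        hi = Max (range phi) \<and> lo = Min (range phi) \<and>
        hi - lo < pi \<and> -pi < (hi + lo) / 2 \<and> (hi + lo) / 2 \<le> pi)"

definition phase_max :: "'n::finite cmat \<Rightarrow> real" where
  "phase_max A = snd (SOME p. sect_decomp_phases A (fst p) (snd p))"

definition phase_min :: "'n::finite cmat \<Rightarrow> real" where
  "phase_min A = fst (SOME p. sect_decomp_phases A (fst p) (snd p))"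

definition Psi :: "'n::finite cmat \<Rightarrow> real set" where
  "Psi A = {phase_min A .. phase_max A}"

definition DW :: "'n::finite cmat \<Rightarrow> (real \<times> real \<times> real) set" where
  "DW A = {(Re (cinner x (A *v x)), Im (cinner x (A *v x)), (norm (A *v x))^2) | x. norm x = 1}"

definition R_ge :: "real \<Rightarrow> 'n::finite cmat \<Rightarrow> real set" where
  "R_ge \<theta> A = {h. h \<ge> 0 \<and> (\<exists>z. Arg z \<notin> {-\<theta><..<\<theta>} \<and> (Re z, Im z, h^2) \<in> DW A)}"

text \<open>gamma_theta(A) = max R_ge theta A (the set is compact, so its sup is its max).\<close>
definition gamma :: "real \<Rightarrow> 'n::finite cmat \<Rightarrow> real" where
  "gamma \<theta> A = Sup (R_ge \<theta> A)"

end

theory Submission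
  imports Defs
begin

lemma cinner_add_right: "cinner x (y + z) = cinner x y + cinner x z"
  by (simp add: cinner_def distrib_left sum.distrib)
lemma cinner_add_left: "cinner (x + y) z = cinner x z + cinner y z"
  by (simp add: cinner_def distrib_right sum.distrib)
lemma cinner_diff_right: "cinner x (y - z) = cinner x y - cinner x z"
  by (simp add: cinner_def right_diff_distrib sum_subtractf)
lemma cinner_diff_left: "cinner (x - y) z = cinner x z - cinner y z"
  by (simp add: cinner_def left_diff_distrib sum_subtractf)
lemma cinner_scale_right: "cinner x (c *s y) = c * cinner x y"
  by (simp add: cinner_def sum_distrib_left algebra_simps)
lemma cinner_scale_left: "cinner (c *s x) y = cnj c * cinner x y"
  by (simp add: cinner_def sum_distrib_left algebra_simps)
lemma vsc: "(r *\<^sub>R (y::complex^'n::finite)) $ i = of_real r * y $ i"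
  by (simp only: vector_scaleR_component) (simp add: scaleR_conv_of_real)
lemma cinner_scaleR_right: "cinner x (r *\<^sub>R y) = of_real r * cinner x y"
  unfolding cinner_def sum_distrib_left vsc by (rule sum.cong) (auto simp: mult_ac)
lemma cinner_scaleR_left: "cinner (r *\<^sub>R x) y = of_real r * cinner x y"
  unfolding cinner_def sum_distrib_left vsc by (rule sum.cong) (auto simp: mult_ac)
lemma cinner_zero_left[simp]: "cinner 0 y = 0" by (simp add: cinner_def)
lemma cinner_zero_right[simp]: "cinner x 0 = 0" by (simp add: cinner_def)
lemma cinner_cnj: "cnj (cinner x y) = cinner y x"
  by (simp add: cinner_def mult.commute)
lemma cinner_self: "cinner x x = of_real ((norm x)^2)"
proof -
  have "(norm x)^2 = (\<Sum>i\<in>UNIV. (norm (x$i))^2)"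
    by (simp add: norm_vec_def L2_set_def sum_nonneg)
  then have "of_real ((norm x)^2) = (\<Sum>i\<in>UNIV. of_real ((norm (x$i))^2) :: complex)"
    by simp
  also have "\<dots> = cinner x x" unfolding cinner_def
    by (rule sum.cong) (auto simp: complex_norm_square mult.commute simp del: of_real_power)
  finally show ?thesis by simp
qed
lemma cinner_adj: "cinner x (M *v y) = cinner (cadj M *v x) y"
proof -
  have "cinner x (M *v y) = (\<Sum>i\<in>UNIV. \<Sum>j\<in>UNIV. cnj (x$i) * M$i$j * y$j)"
    unfolding cinner_def matrix_vector_mult_def by (simp add: sum_distrib_left mult.assoc)
  also have "\<dots> = (\<Sum>j\<in>UNIV. \<Sum>i\<in>UNIV. cnj (x$i) * M$i$j * y$j)"
    by (rule sum.swap)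
  also have "\<dots> = cinner (cadj M *v x) y"
    unfolding cinner_def matrix_vector_mult_def cadj_def
    by (simp add: sum_distrib_right sum_distrib_left cnj_sum mult_ac)
  finally show ?thesis .
qed
lemma mv_scale: "M *v (c *s x) = c *s (M *v (x::complex^'n::finite))"
  by (simp add: vec_eq_iff matrix_vector_mult_def sum_distrib_left algebra_simps)
lemma mv_scaleR: "M *v (r *\<^sub>R x) = r *\<^sub>R (M *v (x::complex^'n::finite))"
  by (simp add: vec_eq_iff matrix_vector_mult_def scaleR_sum_right algebra_simps)
lemma scaleR_vs: "r *\<^sub>R (x::complex^'n::finite) = of_real r *s x"
  unfolding vec_eq_iff vsc by simp
lemma cadj_cadj[simp]: "cadj (cadj M) = M" by (simp add: cadj_def vec_eq_iff)
lemma cadj_mult: "cadj (M ** N) = cadj N ** cadj M"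
  by (simp add: cadj_def vec_eq_iff matrix_matrix_mult_def cnj_sum mult.commute)
lemma cadj_one[simp]: "cadj (mat 1) = mat 1"
  by (simp add: cadj_def vec_eq_iff mat_def)

lemma angle_contra:
  assumes z: "z \<noteq> 0" and a: "Arg z \<in> {-\<theta><..<\<theta>}" and p: "-pi + \<theta> < \<psi>" "\<psi> < pi - \<theta>"
    and eq: "- cnj z = rcis \<rho> \<psi>" and r: "\<rho> > 0"
  shows False
proof -
  have zz: "z = rcis (cmod z) (Arg z)" by (simp add: rcis_cmod_Arg)
  have neg: "- cnj (rcis r t) = rcis r (pi - t)" for r t
    by (simp add: complex_eq_iff Re_rcis Im_rcis cos_diff sin_diff)
  have "- cnj z = rcis (cmod z) (pi - Arg z)"
    using neg[of "cmod z" "Arg z"] zz by simp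
  with eq have e2: "rcis (cmod z) (pi - Arg z) = rcis \<rho> \<psi>" by simp
  then have "cmod (rcis (cmod z) (pi - Arg z)) = cmod (rcis \<rho> \<psi>)" by simp
  then have "cmod z = \<rho>" using r by (simp add: complex_mod_rcis)
  with e2 r have "cis (pi - Arg z) = cis \<psi>" by (simp add: rcis_def)
  then have "cis (pi - Arg z) * cis (-\<psi>) = 1" by (simp add: cis_mult)
  then have "cis (pi - Arg z - \<psi>) = 1" by (simp add: cis_mult)
  then have "cos (pi - Arg z - \<psi>) = 1" by (metis cis.sel(1) one_complex.sel(1))
  then obtain n :: int where n: "pi - Arg z - \<psi> = of_int n * 2 * pi"
    using cos_one_2pi_int[of "pi - Arg z - \<psi>"] by auto
  have "0 < pi - Arg z - \<psi>" "pi - Arg z - \<psi> < 2*pi" using a p by auto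
  with n have "0 < of_int n * (2 * pi)" "of_int n * (2*pi) < 1 * (2*pi)" by (simp_all add: mult.assoc)
  moreover have "(0::real) < 2 * pi" by simp
  ultimately have "(0::real) < of_int n" "(of_int n :: real) < 1"
    using zero_less_mult_pos2 mult_less_cancel_right_pos by blast+
  then have "0 < n" "n < 1" by simp_all
  then show False by simp
qed

lemma cdiag_mv: "cdiag d *v w = (\<chi> k. d k * w $ k)"
  by (simp add: cdiag_def matrix_vector_mult_def vec_eq_iff mult_delta_left)

lemma cinner_diag: "cinner w (cdiag d *v w) = (\<Sum>k\<in>UNIV. of_real ((cmod (w$k))^2) * d k)"
  unfolding cinner_def cdiag_mv by (rule sum.cong) (auto simp: complex_norm_square mult_ac simp del: of_real_power)

lemma invertible_inj: assumes "invertible (T::complex^'n::finite^'n)" "T *v x = 0" shows "x = 0"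
proof -
  from assms(1) obtain T' where "T' ** T = mat 1" unfolding invertible_def by blast
  then have "x = T' *v (T *v x)" by (simp add: matrix_vector_mul_assoc)
  then show ?thesis using assms(2) by simp
qed

lemma arg_half: assumes "Re u > 0" shows "- (pi/2) < Arg u" "Arg u < pi/2"
proof -
  have u: "u \<noteq> 0" using assms by auto
  have c: "cos (Arg u) > 0" using assms u by (simp add: cos_Arg)
  have b: "-pi < Arg u" "Arg u \<le> pi" using Arg_bounded by auto
  show "- (pi/2) < Arg u"
  proof (rule ccontr)
    assume "\<not> - (pi/2) < Arg u"
    then have "0 \<le> cos (pi - (- Arg u))" using b by (intro cos_ge_zero) auto
    then have "cos (Arg u) \<le> 0" by (simp add: cos_diff)
    then show False using c by simp
  qed
  show "Arg u < pi/2"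
  proof (rule ccontr)
    assume "\<not> Arg u < pi/2"
    then have "0 \<le> cos (pi - Arg u)" using b by (intro cos_ge_zero) auto
    then have "cos (Arg u) \<le> 0" by (simp add: cos_diff)
    then show False using c by simp
  qed
qed

lemma L_cone: assumes "sect_decomp_phases (B::complex^'n::finite^'n) lo hi" "x \<noteq> 0"
  shows "\<exists>\<rho>>0. \<exists>\<psi>\<in>{lo..hi}. cinner x (B *v x) = rcis \<rho> \<psi>"
proof -
  from assms(1) obtain T and phi :: "'n \<Rightarrow> real" where T: "invertible T"
    and BT: "B = cadj T ** cdiag (\<lambda>k. cis (phi k)) ** T"
    and hi: "hi = Max (range phi)" and lo: "lo = Min (range phi)" and hl: "hi - lo < pi"
    unfolding sect_decomp_phases_def by blast
  have rng: "lo \<le> phi k" "phi k \<le> hi" for k using hi lo by auto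
  define w where "w = T *v x"
  have w0: "w \<noteq> 0"
  proof
    assume "w = 0" then have "x = 0" using invertible_inj[OF T, of x] w_def by simp
    then show False using assms(2) by simp
  qed
  then obtain k0 where k0: "w $ k0 \<noteq> 0" by (auto simp: vec_eq_iff)
  define nk where "nk k = (cmod (w$k))^2" for k
  have nk0: "nk k \<ge> 0" for k by (simp add: nk_def)
  have nkp: "nk k0 > 0" using k0 by (simp add: nk_def)
  define S where "S = cinner x (B *v x)"
  have S: "S = (\<Sum>k\<in>UNIV. of_real (nk k) * cis (phi k))"
  proof -
    have "B *v x = cadj T *v (cdiag (\<lambda>k. cis (phi k)) *v w)"
      by (simp add: BT w_def matrix_vector_mul_assoc matrix_mul_assoc)
    then have "S = cinner w (cdiag (\<lambda>k. cis (phi k)) *v w)"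
      by (simp add: S_def cinner_adj w_def)
    then show ?thesis by (simp add: cinner_diag nk_def)
  qed
  have rot: "cis (-a) * S = (\<Sum>k\<in>UNIV. of_real (nk k) * cis (phi k - a))" for a
    unfolding S sum_distrib_left by (rule sum.cong) (auto simp: cis_mult mult_ac)
  have Im_rot: "Im (cis (-a) * S) = (\<Sum>k\<in>UNIV. nk k * sin (phi k - a))" for a
    unfolding rot by simp
  have Re_rot: "Re (cis (-a) * S) = (\<Sum>k\<in>UNIV. nk k * cos (phi k - a))" for a
    unfolding rot by simp
  define m where "m = (lo + hi) / 2"
  define u where "u = cis (-m) * S"
  have "Re u > 0" unfolding u_def Re_rot
  proof (rule sum_pos2[of UNIV k0])
    have "cos (phi k - m) > 0" for k
      using rng[of k] hl by (intro cos_gt_zero_pi) (simp_all add: m_def field_simps)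
    then show "0 < nk k0 * cos (phi k0 - m)" "\<And>i. i \<in> UNIV \<Longrightarrow> 0 \<le> nk i * cos (phi i - m)"
      using nkp nk0 by (auto intro: less_imp_le mult_nonneg_nonneg)
  qed auto
  then have u0: "u \<noteq> 0" by auto
  define \<beta> where "\<beta> = Arg u"
  have \<beta>: "- (pi/2) < \<beta>" "\<beta> < pi/2" using arg_half[OF \<open>Re u > 0\<close>] by (auto simp: \<beta>_def)
  have uu: "u = rcis (cmod u) \<beta>" by (simp add: \<beta>_def rcis_cmod_Arg)
  have Su: "S = rcis (cmod u) (m + \<beta>)"
  proof -
    have "S = cis m * u" by (simp add: u_def mult.assoc[symmetric] cis_mult)
    also have "\<dots> = rcis (cmod u) (m + \<beta>)" by (subst uu) (simp add: rcis_def cis_mult mult_ac add.commute)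
    finally show ?thesis .
  qed
  have Ima: "Im (cis (-a) * S) = cmod u * sin (m + \<beta> - a)" for a
    by (subst Su) (simp add: rcis_def cis_mult sin_diff algebra_simps)
  have cu: "cmod u > 0" using u0 by simp
  have "Im (cis (-lo) * S) \<ge> 0" unfolding Im_rot
    using rng hl by (intro sum_nonneg mult_nonneg_nonneg nk0 sin_ge_zero) (auto, smt (verit) rng)
  then have "cmod u * sin (m + \<beta> - lo) \<ge> 0" by (simp only: Ima)
  then have s1: "sin (m + \<beta> - lo) \<ge> 0" using cu by (simp add: zero_le_mult_iff)
  have "Im (cis (-hi) * S) \<le> 0" unfolding Im_rot
  proof (intro sum_nonpos mult_nonneg_nonpos nk0)
    fix k
    have "0 \<le> sin (hi - phi k)" using rng[of k] hl by (intro sin_ge_zero) auto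
    then show "sin (phi k - hi) \<le> 0" by (metis minus_diff_eq neg_0_le_iff_le sin_minus)
  qed
  then have "cmod u * sin (m + \<beta> - hi) \<le> 0" by (simp only: Ima)
  then have s2: "sin (m + \<beta> - hi) \<le> 0" using cu by (simp add: mult_le_0_iff)
  have "lo \<le> m + \<beta>"
  proof (rule ccontr)
    assume "\<not> lo \<le> m + \<beta>"
    then have "0 < sin (lo - (m + \<beta>))" using \<beta> hl rng[of k0] by (intro sin_gt_zero) (auto simp: m_def field_simps)
    then show False using s1 by (metis minus_diff_eq neg_0_le_iff_le sin_minus linorder_not_less)
  qed
  moreover have "m + \<beta> \<le> hi"
  proof (rule ccontr)
    assume "\<not> m + \<beta> \<le> hi"
    then have "0 < sin (m + \<beta> - hi)" using \<beta> hl rng[of k0] by (intro sin_gt_zero) (auto simp: m_def field_simps)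
    then show False using s2 by simp
  qed
  ultimately have "m + \<beta> \<in> {lo..hi}" by simp
  then show ?thesis using Su cu unfolding S_def by blast
qed

lemma cont_cinner_right[continuous_intros]: "continuous_on S (\<lambda>w. cinner u (w::complex^'n::finite))"
  unfolding cinner_def by (intro continuous_intros)

lemma cont_quad[continuous_intros]: "continuous_on S (\<lambda>x. cinner x (G *v (x::complex^'n::finite)))"
  unfolding cinner_def by (intro continuous_intros)

lemma kernel_exists:
  fixes u :: "'n::finite \<Rightarrow> complex^'n"
  assumes "S \<noteq> UNIV"
  shows "\<exists>w. w \<noteq> 0 \<and> (\<forall>j\<in>S. cinner (u j) w = 0)"
proof -
  from assms obtain a where a: "a \<notin> S" by blast
  define M :: "complex^'n^'n" where "M = (\<chi> j k. if j \<in> S then cnj (u j $ k) else 0)"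
  have "row a M = 0" using a by (simp add: M_def row_def vec_eq_iff)
  then have "det M = 0" by (metis det_zero_row(1) row_def vec_lambda_eta)
  then have "\<not> inj ((*v) M)"
    using det_nz_iff_inj_gen[of "(*v) M"] by simp
  then obtain x y where "x \<noteq> y" "M *v x = M *v y" unfolding inj_def by blast
  then have "M *v (x - y) = 0" "x - y \<noteq> 0" by (simp_all add: matrix_vector_mult_diff_distrib)
  moreover have "cinner (u j) w = (M *v w) $ j" if "j \<in> S" for j w
    using that by (simp add: M_def cinner_def matrix_vector_mult_def)
  ultimately show ?thesis by (metis zero_index)
qed

lemma quad_zero: fixes a q :: real assumes "\<And>t. 2*t*a + t^2*q \<le> 0" shows "a = 0"
proof (rule ccontr)
  assume a0: "a \<noteq> 0"
  define M where "M = \<bar>q\<bar> + 1"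
  have M: "M > 0" "2*M + q > 0" by (auto simp: M_def)
  define t where "t = a / M"
  have "2*t*a + t^2*q = (a^2 / M^2) * (2*M + q)"
    using M by (simp add: t_def field_simps power2_eq_square)
  also have "\<dots> > 0" using M a0 by (intro mult_pos_pos) auto
  finally show False using assms[of t] by simp
qed

definition hf :: "complex^'n::finite^'n \<Rightarrow> complex^'n \<Rightarrow> complex^'n \<Rightarrow> complex" where
  "hf G x y = (cinner x (G *v y) + cnj (cinner y (G *v x))) / 2"
definition kf :: "complex^'n::finite^'n \<Rightarrow> complex^'n \<Rightarrow> complex^'n \<Rightarrow> complex" where
  "kf G x y = (cinner x (G *v y) - cnj (cinner y (G *v x))) / (2 * \<i>)"

lemma hk_split: "cinner x (G *v y) = hf G x y + \<i> * kf G x y"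
  by (simp add: hf_def kf_def field_simps)
lemma hf_sym: "hf G y x = cnj (hf G x y)"
  by (simp add: hf_def)
lemma kf_sym: "kf G y x = cnj (kf G x y)"
  by (simp add: kf_def field_simps)
lemma hf_self: "hf G x x = of_real (Re (cinner x (G *v x)))"
  by (simp add: hf_def complex_add_cnj)
lemma kf_self: "kf G x x = of_real (Im (cinner x (G *v x)))"
  by (simp add: kf_def complex_diff_cnj field_simps)
lemma hf_add: "hf G x (y + z) = hf G x y + hf G x z"
  by (simp add: hf_def cinner_add_right cinner_add_left matrix_vector_right_distrib field_simps)
lemma kf_add: "kf G x (y + z) = kf G x y + kf G x z"
  by (simp add: kf_def cinner_add_right cinner_add_left matrix_vector_right_distrib field_simps)
lemma hf_scale: "hf G x (c *s y) = c * hf G x y"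
  by (simp add: hf_def cinner_scale_right cinner_scale_left mv_scale field_simps)
lemma kf_scale: "kf G x (c *s y) = c * kf G x y"
  by (simp add: kf_def cinner_scale_right cinner_scale_left mv_scale field_simps)
lemma hf_vec: "hf G u w = cinner ((1/2 :: complex) *s (cadj G *v u + G *v u)) w"
  by (simp add: hf_def cinner_scale_left cinner_add_left cinner_adj[symmetric] cinner_cnj)

definition Inv :: "complex^'n::finite^'n \<Rightarrow> 'n set \<Rightarrow> ('n \<Rightarrow> complex^'n) \<Rightarrow> bool" where
  "Inv G S v \<longleftrightarrow> (\<forall>i\<in>S. v i \<noteq> 0) \<and>
     (\<forall>i\<in>S. \<forall>j\<in>S. i \<noteq> j \<longrightarrow> hf G (v i) (v j) = 0 \<and> kf G (v i) (v j) = 0) \<and>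
     (\<forall>i\<in>S. \<forall>w. (\<forall>j\<in>S. hf G (v j) w = 0) \<longrightarrow> kf G (v i) w = 0)"

lemma quad_expand: "cinner (x + t *\<^sub>R y) (G *v (x + t *\<^sub>R y)) =
   cinner x (G *v x) + of_real t * (cinner x (G *v y) + cinner y (G *v x)) + of_real t * of_real t * cinner y (G *v y)"
  by (simp add: cinner_add_left cinner_add_right cinner_scaleR_left cinner_scaleR_right
      matrix_vector_right_distrib mv_scaleR algebra_simps)

lemma quad_scaleR: "cinner (c *\<^sub>R y) (G *v (c *\<^sub>R y)) = of_real (c^2) * cinner y (G *v y)"
  by (simp add: cinner_scaleR_left cinner_scaleR_right mv_scaleR power2_eq_square)

lemma step:
  fixes G :: "complex^'n::finite^'n"
  assumes pos: "\<And>x. x \<noteq> 0 \<Longrightarrow> Re (cinner x (G *v x)) > 0"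
    and inv: "Inv G S v" and aS: "a \<notin> S"
  shows "\<exists>v'. Inv G (insert a S) v'"
proof -
  define q where "q x = cinner x (G *v x)" for x
  define W where "W = {w. \<forall>j\<in>S. hf G (v j) w = 0}"
  have W_add: "x + y \<in> W" if "x \<in> W" "y \<in> W" for x y using that by (simp add: W_def hf_add)
  have W_scale: "c *s x \<in> W" if "x \<in> W" for x c using that by (simp add: W_def hf_scale)
  have W_scaleR: "r *\<^sub>R x \<in> W" if "x \<in> W" for x r using W_scale[OF that] by (simp add: scaleR_vs)
  define u where "u j = (1/2 :: complex) *s (cadj G *v v j + G *v v j)" for j
  have Wu: "W = {w. \<forall>j\<in>S. cinner (u j) w = 0}" by (simp add: W_def u_def hf_vec)
  have "S \<noteq> UNIV" using aS by blast
  from kernel_exists[OF this, of u] obtain w1 where w1: "w1 \<noteq> 0" "w1 \<in> W" by (auto simp: Wu)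
  have clW: "closed W"
  proof -
    have "W = (\<Inter>j\<in>S. {w. cinner (u j) w = 0})" by (auto simp: Wu)
    moreover have "closed {w. cinner (u j) w = (0::complex)}" for j
      by (intro closed_Collect_eq continuous_intros)
    ultimately show ?thesis by auto
  qed
  define X where "X = W \<inter> sphere 0 1"
  have cX: "compact X" unfolding X_def by (intro closed_Int_compact clW compact_sphere)
  have "(1 / norm w1) *\<^sub>R w1 \<in> X" using w1 by (simp add: X_def W_scaleR)
  then have neX: "X \<noteq> {}" by blast
  define f where "f x = Im (q x) / Re (q x)" for x
  have "continuous_on X f" unfolding f_def q_def
  proof (intro continuous_intros ballI)
    fix x assume "x \<in> X" then have "x \<noteq> 0" by (auto simp: X_def)
    then show "Re (cinner x (G *v x)) \<noteq> 0" using pos by force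
  qed
  from continuous_attains_sup[OF cX neX this] obtain v0 where v0: "v0 \<in> X" "\<And>y. y \<in> X \<Longrightarrow> f y \<le> f v0"
    by blast
  have v0W: "v0 \<in> W" and v00: "v0 \<noteq> 0" using v0(1) by (auto simp: X_def)
  define lam where "lam = f v0"
  have bound: "Im (q w) - lam * Re (q w) \<le> 0" if "w \<in> W" for w
  proof (cases "w = 0")
    case True then show ?thesis by (simp add: q_def)
  next
    case False
    define c where "c = 1 / norm w"
    have c0: "c \<noteq> 0" using False by (simp add: c_def)
    have "c *\<^sub>R w \<in> X" using that False by (simp add: X_def W_scaleR c_def)
    then have "f (c *\<^sub>R w) \<le> lam" using v0(2) lam_def by blast
    moreover have "f (c *\<^sub>R w) = f w" using c0 by (simp add: f_def q_def quad_scaleR)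
    ultimately have "Im (q w) / Re (q w) \<le> lam" by (simp add: f_def)
    moreover have "Re (q w) > 0" using pos False by (simp add: q_def)
    ultimately show ?thesis by (simp add: pos_divide_le_eq mult.commute)
  qed
  have phi0: "Im (q v0) - lam * Re (q v0) = 0"
  proof -
    have "Re (q v0) > 0" using pos v00 by (simp add: q_def)
    then show ?thesis by (simp add: lam_def f_def)
  qed
  have R: "Re (kf G v0 w) = 0" if wW: "w \<in> W" and h0: "hf G v0 w = 0" for w
  proof -
    define k where "k = kf G v0 w"
    have cross: "cinner v0 (G *v w) + cinner w (G *v v0) = \<i> * of_real (2 * Re k)"
    proof -
      have "cinner v0 (G *v w) = \<i> * k" by (simp add: hk_split h0 k_def)
      moreover have "cinner w (G *v v0) = \<i> * cnj k"
        by (simp add: hk_split hf_sym[of G w v0] kf_sym[of G w v0] h0 k_def)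
      ultimately show ?thesis by (simp add: complex_eq_iff algebra_simps)
    qed
    have "2 * t * Re k + t^2 * (Im (q w) - lam * Re (q w)) \<le> 0" for t
    proof -
      have "v0 + t *\<^sub>R w \<in> W" using v0W wW by (simp add: W_add W_scaleR)
      then have "Im (q (v0 + t *\<^sub>R w)) - lam * Re (q (v0 + t *\<^sub>R w)) \<le> 0" by (rule bound)
      also have "Im (q (v0 + t *\<^sub>R w)) - lam * Re (q (v0 + t *\<^sub>R w)) =
          (Im (q v0) - lam * Re (q v0)) + 2 * t * Re k + t^2 * (Im (q w) - lam * Re (q w))"
        unfolding q_def quad_expand cross by (simp add: algebra_simps power2_eq_square)
      finally show ?thesis using phi0 by simp
    qed
    then show ?thesis using quad_zero k_def by blast
  qed
  have key: "kf G v0 w = 0" if wW: "w \<in> W" and h0: "hf G v0 w = 0" for w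
  proof -
    have "Re (kf G v0 w) = 0" using R[OF wW h0] .
    moreover have "Re (kf G v0 (\<i> *s w)) = 0" using R[OF W_scale[OF wW]] h0 by (simp add: hf_scale)
    then have "Im (kf G v0 w) = 0" by (simp add: kf_scale)
    ultimately show ?thesis by (simp add: complex_eq_iff)
  qed
  define v' where "v' = v(a := v0)"
  have vS: "v' i = v i" if "i \<in> S" for i using that aS by (auto simp: v'_def)
  have va: "v' a = v0" by (simp add: v'_def)
  from inv have I1: "\<forall>i\<in>S. v i \<noteq> 0"
    and I2: "\<forall>i\<in>S. \<forall>j\<in>S. i \<noteq> j \<longrightarrow> hf G (v i) (v j) = 0 \<and> kf G (v i) (v j) = 0"
    and I3: "\<forall>i\<in>S. \<forall>w. (\<forall>j\<in>S. hf G (v j) w = 0) \<longrightarrow> kf G (v i) w = 0"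
    unfolding Inv_def by blast+
  have hv0: "hf G (v j) v0 = 0" "kf G (v j) v0 = 0" if "j \<in> S" for j
    using v0W that I3 by (auto simp: W_def)
  have P1: "\<forall>i\<in>insert a S. v' i \<noteq> 0" using I1 vS va v00 by auto
  have P2: "hf G (v' i) (v' j) = 0 \<and> kf G (v' i) (v' j) = 0"
    if ij: "i \<in> insert a S" "j \<in> insert a S" "i \<noteq> j" for i j
  proof (cases "i = a")
    case True
    then have "j \<in> S" using ij by auto
    then show ?thesis using True hv0[of j] vS va hf_sym[of G v0 "v j"] kf_sym[of G v0 "v j"] by simp
  next
    case False
    then have iS: "i \<in> S" using ij by auto
    show ?thesis
    proof (cases "j = a")
      case True then show ?thesis using iS hv0[of i] vS va by simp
    next
      case False then show ?thesis using iS ij I2 vS by auto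
    qed
  qed
  have P3: "kf G (v' i) w = 0"
    if i: "i \<in> insert a S" and hw: "\<forall>j\<in>insert a S. hf G (v' j) w = 0" for i w
  proof -
    have wW: "w \<in> W" using hw vS by (auto simp: W_def)
    have h0: "hf G v0 w = 0" using hw va by auto
    show "kf G (v' i) w = 0"
    proof (cases "i = a")
      case True then show ?thesis using key[OF wW h0] va by simp
    next
      case False then have "i \<in> S" using i by auto
      then show ?thesis using I3 wW vS by (auto simp: W_def)
    qed
  qed
  have "Inv G (insert a S) v'" unfolding Inv_def using P1 P2 P3 by blast
  then show ?thesis by blast
qed

lemma simul_diag:
  fixes G :: "complex^'n::finite^'n"
  assumes pos: "\<And>x. x \<noteq> 0 \<Longrightarrow> Re (cinner x (G *v x)) > 0"
  shows "\<exists>v::'n \<Rightarrow> complex^'n. (\<forall>i. v i \<noteq> 0) \<and> (\<forall>i j. i \<noteq> j \<longrightarrow> cinner (v i) (G *v v j) = 0)"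
proof -
  have "\<exists>v. Inv G S v" for S :: "'n set"
  proof (induction S rule: finite_induct[OF finite])
    case 1 then show ?case by (simp add: Inv_def)
  next
    case (2 a S)
    then obtain v where "Inv G S v" by blast
    then show ?case using step[OF pos _ 2(2)] by blast
  qed
  then obtain v where "Inv G UNIV v" by blast
  then have "(\<forall>i. v i \<noteq> 0) \<and> (\<forall>i j. i \<noteq> j \<longrightarrow> cinner (v i) (G *v v j) = 0)"
    unfolding Inv_def by (auto simp: hk_split)
  then show ?thesis by blast
qed

lemma quad_expand2: "cinner (s *\<^sub>R x + t *\<^sub>R y) (G *v (s *\<^sub>R x + t *\<^sub>R y)) =
   of_real s * of_real s * cinner x (G *v x) + of_real s * of_real t * (cinner x (G *v y) + cinner y (G *v x))
   + of_real t * of_real t * cinner y (G *v y)"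
  by (simp add: cinner_add_left cinner_add_right cinner_scaleR_left cinner_scaleR_right
      matrix_vector_right_distrib mv_scaleR algebra_simps)

lemma shift_mat:
  fixes B :: "complex^'n::finite^'n" and a d :: complex
  defines "C \<equiv> (\<chi> i j. (B$i$j - (if i = j then a else 0)) / d)"
  shows "cinner u (C *v v) = (cinner u (B *v v) - a * cinner u v) / d"
proof -
  have "C *v v = (1/d) *s (B *v v - a *s v)"
    by (simp add: C_def vec_eq_iff matrix_vector_mult_def sum_divide_distrib[symmetric]
        left_diff_distrib sum_subtractf field_simps mult_delta_right, simp add: add_divide_distrib[symmetric])
  then show ?thesis
    by (simp add: cinner_scale_right cinner_diff_right diff_divide_distrib)
qed

lemma norm_unit_scale: assumes "cmod \<omega> = 1" shows "norm (\<omega> *s (y::complex^'n::finite)) = norm y"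
proof -
  have "of_real ((norm (\<omega> *s y))^2) = (of_real ((norm y)^2) :: complex)"
    unfolding cinner_self[symmetric] cinner_scale_left cinner_scale_right
    using assms by (simp add: mult.assoc[symmetric] complex_norm_square[symmetric] mult.commute)
  then have "(norm (\<omega> *s y))^2 = (norm y)^2" using of_real_eq_iff by blast
  then show ?thesis by (simp add: power2_eq_iff_nonneg)
qed

lemma TH:
  fixes B :: "complex^'n::finite^'n"
  assumes nx: "norm x = 1" and ny: "norm y = 1" and t: "0 \<le> t" "t \<le> 1"
  shows "\<exists>z. norm z = 1 \<and> cinner z (B *v z) = of_real (1 - t) * cinner x (B *v x) + of_real t * cinner y (B *v y)"
proof (cases "cinner x (B *v x) = cinner y (B *v y)")
  case True
  then show ?thesis using nx by (intro exI[of _ x]) (simp add: algebra_simps)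
next
  case False
  define a where "a = cinner x (B *v x)"
  define b where "b = cinner y (B *v y)"
  have ab: "b - a \<noteq> 0" using False by (simp add: a_def b_def)
  define C :: "complex^'n^'n" where "C = (\<chi> i j. (B$i$j - (if i = j then a else 0)) / (b - a))"
  have CF: "cinner u (C *v v) = (cinner u (B *v v) - a * cinner u v) / (b - a)" for u v
    unfolding C_def by (rule shift_mat)
  have cxx: "cinner x x = 1" using nx by (simp add: cinner_self)
  define c1 where "c1 = cinner x (C *v y)"
  define c2 where "c2 = cinner y (C *v x)"
  define d where "d = c1 - cnj c2"
  define \<omega> where "\<omega> = (if d = 0 then 1 else cnj d / of_real (cmod d))"
  have w1: "cmod \<omega> = 1" by (simp add: \<omega>_def norm_divide)
  have wc: "cnj \<omega> * \<omega> = 1"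
    using w1 by (metis complex_norm_square mult.commute of_real_1 power_one)
  have wd: "Im (\<omega> * d) = 0"
  proof (cases "d = 0")
    case True then show ?thesis by simp
  next
    case False
    have "\<omega> * d = (cnj d * d) / of_real (cmod d)" using False by (simp add: \<omega>_def)
    moreover have "cnj d * d = of_real ((cmod d)^2)"
      by (simp add: complex_norm_square mult.commute del: of_real_power)
    ultimately have "\<omega> * d = of_real ((cmod d)^2 / cmod d)" by simp
    then show ?thesis by (metis Im_complex_of_real)
  qed
  define y' where "y' = \<omega> *s y"
  have ny': "norm y' = 1" unfolding y'_def by (subst norm_unit_scale[OF w1]) (rule ny)
  have cyy: "cinner y' y' = 1" using ny' by (simp add: cinner_self)
  have Cxx: "cinner x (C *v x) = 0" by (simp add: CF cxx a_def)
  have Cyy: "cinner y' (C *v y') = 1"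
  proof -
    have "cinner y' (B *v y') = cnj \<omega> * \<omega> * b"
      by (simp add: y'_def mv_scale cinner_scale_left cinner_scale_right b_def)
    then show ?thesis using wc ab by (simp add: CF cyy)
  qed
  define \<kappa> where "\<kappa> = Re (cinner x (C *v y') + cinner y' (C *v x))"
  have cross: "cinner x (C *v y') + cinner y' (C *v x) = of_real \<kappa>"
  proof -
    have "cinner x (C *v y') + cinner y' (C *v x) = \<omega> * c1 + cnj \<omega> * c2"
      by (simp add: y'_def mv_scale cinner_scale_left cinner_scale_right c1_def c2_def)
    moreover have "Im (\<omega> * c1 + cnj \<omega> * c2) = 0"
      using wd by (simp add: d_def algebra_simps)
    ultimately show ?thesis by (simp add: \<kappa>_def complex_eq_iff)
  qed
  define p where "p s = (1 - s) *\<^sub>R x + s *\<^sub>R y'" for s :: real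
  define r where "r s = (1 - s) * s * \<kappa> + s^2" for s :: real
  have Fp: "cinner (p s) (C *v p s) = of_real (r s)" for s
    unfolding p_def quad_expand2 Cxx Cyy cross r_def by (simp add: power2_eq_square)
  have p0: "p s \<noteq> 0" if s: "0 \<le> s" "s \<le> 1" for s
  proof
    assume ps: "p s = 0"
    then have e: "(1 - s) *\<^sub>R x = - (s *\<^sub>R y')" by (simp add: p_def eq_neg_iff_add_eq_0)
    then have "norm ((1 - s) *\<^sub>R x) = norm (s *\<^sub>R y')" by (metis norm_minus_cancel)
    then have "1 - s = s" using nx ny' s by simp
    then have s2: "s = 1/2" by simp
    have "(1/2::real) *\<^sub>R x = (1/2::real) *\<^sub>R (- y')" using e s2 by simp
    then have "x = - y'" by (simp only: scaleR_cancel_left) simp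
    then have "a = cinner y' (B *v y')" unfolding a_def
      by (simp add: cinner_def matrix_vector_mult_def sum_negf)
    also have "\<dots> = b"
      using wc by (simp add: y'_def mv_scale cinner_scale_left cinner_scale_right b_def mult.commute)
    finally show False using ab by simp
  qed
  define g where "g s = r s / (norm (p s))^2" for s
  have "continuous_on {0..1} g" unfolding g_def r_def p_def
  proof (intro continuous_intros ballI)
    fix s :: real assume "s \<in> {0..1}"
    then show "(norm ((1 - s) *\<^sub>R x + s *\<^sub>R y'))^2 \<noteq> 0" using p0[of s] by (simp add: p_def)
  qed
  moreover have "g 0 = 0" by (simp add: g_def r_def)
  moreover have "g 1 = 1" by (simp add: g_def r_def p_def ny')
  ultimately obtain s where s: "0 \<le> s" "s \<le> 1" "g s = t"
    using IVT'[of g 0 t 1] t by auto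
  define n where "n = norm (p s)"
  have n0: "n > 0" using p0[OF s(1,2)] by (simp add: n_def)
  define z where "z = (1 / n) *\<^sub>R p s"
  have nz: "norm z = 1" using n0 by (simp add: z_def n_def)
  have czz: "cinner z z = 1" using nz by (simp add: cinner_self)
  have "cinner z (C *v z) = of_real ((1/n)^2) * of_real (r s)"
    unfolding z_def quad_scaleR Fp ..
  also have "\<dots> = of_real t"
  proof -
    have "(1/n)^2 * r s = t" using s(3) by (simp add: g_def n_def power_divide)
    then show ?thesis by (metis of_real_mult)
  qed
  finally have "(cinner z (B *v z) - a) / (b - a) = of_real t" by (simp add: CF czz)
  then have "cinner z (B *v z) = a + of_real t * (b - a)" using ab by (simp add: field_simps)
  then show ?thesis using nz by (intro exI[of _ z]) (simp add: a_def b_def algebra_simps)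
qed

lemma num_range_img: "num_range B = (\<lambda>x. cinner x (B *v x)) ` sphere 0 1"
  by (auto simp: num_range_def)

lemma num_range_closed: "closed (num_range B)"
  unfolding num_range_img
  by (intro compact_imp_closed compact_continuous_image compact_sphere continuous_intros)

lemma num_range_convex: "convex (num_range (B::complex^'n::finite^'n))"
  unfolding convex_alt
proof (intro ballI allI impI)
  fix a b and u :: real assume a: "a \<in> num_range B" and b: "b \<in> num_range B" and u: "0 \<le> u \<and> u \<le> 1"
  from a obtain x where x: "norm x = 1" "a = cinner x (B *v x)" by (auto simp: num_range_def)
  from b obtain y where y: "norm y = 1" "b = cinner y (B *v y)" by (auto simp: num_range_def)
  from TH[OF x(1) y(1), of u B] u obtain z where
    "norm z = 1" "cinner z (B *v z) = of_real (1 - u) * a + of_real u * b"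
    using x y by auto
  then show "(1 - u) *\<^sub>R a + u *\<^sub>R b \<in> num_range B"
    unfolding num_range_def by (auto simp: scaleR_conv_of_real intro!: exI[of _ z])
qed

lemma sect_rot:
  fixes B :: "complex^'n::finite^'n"
  assumes "sectorial B"
  shows "\<exists>\<mu>. \<forall>x. x \<noteq> 0 \<longrightarrow> Re (\<mu> * cinner x (B *v x)) > 0"
proof -
  have "0 \<notin> num_range B" using assms by (simp add: sectorial_def)
  from separating_hyperplane_closed_0[OF num_range_convex num_range_closed this]
  obtain a :: complex and b where ab: "a \<noteq> 0" "0 < b" "\<forall>z\<in>num_range B. inner a z > b" by blast
  have unit: "Re (cnj a * cinner y (B *v y)) > 0" if "norm y = 1" for y
  proof -
    have "cinner y (B *v y) \<in> num_range B" using that by (auto simp: num_range_def)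
    then have "inner a (cinner y (B *v y)) > b" using ab by blast
    then show ?thesis using ab(2) by (simp add: inner_complex_def)
  qed
  have "Re (cnj a * cinner x (B *v x)) > 0" if "x \<noteq> 0" for x
  proof -
    define y where "y = (1 / norm x) *\<^sub>R x"
    have ny: "norm y = 1" using that by (simp add: y_def)
    have xy: "x = norm x *\<^sub>R y" using that by (simp add: y_def)
    have "cinner x (B *v x) = of_real ((norm x)^2) * cinner y (B *v y)"
      by (subst (1 2) xy) (rule quad_scaleR)
    then have "Re (cnj a * cinner x (B *v x)) = (norm x)^2 * Re (cnj a * cinner y (B *v y))"
      by (simp add: algebra_simps)
    also have "\<dots> > 0" using unit[OF ny] that by simp
    finally show ?thesis .
  qed
  then show ?thesis by blast
qed

lemma phase_normalize:
  fixes \<phi>0 :: "'n::finite \<Rightarrow> real"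
  assumes b: "\<And>k. c - pi/2 < \<phi>0 k" "\<And>k. \<phi>0 k < c + pi/2"
  shows "\<exists>\<phi>. (\<forall>k. cis (\<phi> k) = cis (\<phi>0 k)) \<and> Max (range \<phi>) - Min (range \<phi>) < pi \<and>
     -pi < (Max (range \<phi>) + Min (range \<phi>)) / 2 \<and> (Max (range \<phi>) + Min (range \<phi>)) / 2 \<le> pi"
proof -
  define hi0 where "hi0 = Max (range \<phi>0)"
  define lo0 where "lo0 = Min (range \<phi>0)"
  have "hi0 \<in> range \<phi>0" "lo0 \<in> range \<phi>0" unfolding hi0_def lo0_def
    by (intro Max_in Min_in; simp)+
  then obtain k1 k2 where "hi0 = \<phi>0 k1" "lo0 = \<phi>0 k2" by blast
  then have d: "hi0 - lo0 < pi" using b[of k1] b[of k2] by simp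
  define m0 where "m0 = (hi0 + lo0) / 2"
  define s where "s = \<lfloor>(pi - m0) / (2*pi)\<rfloor>"
  define \<phi> where "\<phi> k = \<phi>0 k + 2 * pi * of_int s" for k
  have r: "range \<phi> = (\<lambda>k. \<phi>0 k + 2 * pi * of_int s) ` UNIV" by (simp add: \<phi>_def)
  have hi: "Max (range \<phi>) = hi0 + 2 * pi * of_int s"
    unfolding r hi0_def by (rule Max_add_commute) auto
  have lo: "Min (range \<phi>) = lo0 + 2 * pi * of_int s"
    unfolding r lo0_def by (rule Min_add_commute) auto
  have s1: "of_int s \<le> (pi - m0) / (2*pi)" unfolding s_def by simp
  have s2: "(pi - m0) / (2*pi) < of_int s + 1" unfolding s_def by linarith
  have s1': "2 * pi * of_int s \<le> pi - m0" using s1 by (simp add: field_simps)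
  have s2': "pi - m0 < 2 * pi * of_int s + 2 * pi" using s2 by (simp add: field_simps)
  have "cis (\<phi> k) = cis (\<phi>0 k)" for k
    unfolding \<phi>_def cis_mult[symmetric] by simp
  moreover have "Max (range \<phi>) - Min (range \<phi>) < pi" using d hi lo by simp
  moreover have "-pi < (Max (range \<phi>) + Min (range \<phi>)) / 2" using s2' hi lo by (simp add: m0_def field_simps)
  moreover have "(Max (range \<phi>) + Min (range \<phi>)) / 2 \<le> pi" using s1' hi lo by (simp add: m0_def field_simps)
  ultimately show ?thesis by blast
qed

lemma sandwich:
  fixes v :: "'n::finite \<Rightarrow> complex^'n" and M :: "complex^'n^'n"
  shows "(cadj (\<chi> i j. v j $ i) ** M ** (\<chi> i j. v j $ i)) $ i $ j = cinner (v i) (M *v v j)"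
proof -
  have "(cadj (\<chi> i j. v j $ i) ** M ** (\<chi> i j. v j $ i)) $ i $ j =
      (\<Sum>k\<in>UNIV. \<Sum>l\<in>UNIV. cnj (v i $ l) * M $ l $ k * v j $ k)"
    by (simp add: cadj_def matrix_matrix_mult_def sum_distrib_right)
  also have "\<dots> = (\<Sum>l\<in>UNIV. \<Sum>k\<in>UNIV. cnj (v i $ l) * M $ l $ k * v j $ k)"
    by (rule sum.swap)
  also have "\<dots> = cinner (v i) (M *v v j)"
    by (simp add: cinner_def matrix_vector_mult_def sum_distrib_left mult.assoc)
  finally show ?thesis .
qed

lemma cdiag_mult: "cdiag a ** cdiag b = cdiag (\<lambda>k. a k * b k)"
  by (simp add: vec_eq_iff cdiag_def matrix_matrix_mult_def mult_delta_left mult_delta_right)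

lemma cdiag_one: "cdiag (\<lambda>k. 1) = mat 1"
  by (simp add: vec_eq_iff cdiag_def mat_def)

lemma cadj_cdiag: "cadj (cdiag d) = cdiag (\<lambda>k. cnj (d k))"
  by (simp add: vec_eq_iff cdiag_def cadj_def)

lemma cdiag_const_left: "cdiag (\<lambda>_. c) ** M = (\<chi> i j. c * M$i$j)"
  by (simp add: vec_eq_iff cdiag_def matrix_matrix_mult_def mult_delta_left)

lemma cdiag_const_right: "M ** cdiag (\<lambda>_. c) = (\<chi> i j. M$i$j * c)"
  by (simp add: vec_eq_iff cdiag_def matrix_matrix_mult_def mult_delta_right)

lemma cdiag_invertible: assumes "\<And>k. d k \<noteq> 0" shows "invertible (cdiag d)"
  unfolding invertible_def
  by (rule exI[of _ "cdiag (\<lambda>k. 1 / d k)"]) (simp add: cdiag_mult assms cdiag_one)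

lemma L_exist: assumes sec: "sectorial (B::complex^'n::finite^'n)"
  shows "\<exists>lo hi. sect_decomp_phases B lo hi"
proof -
  from sect_rot[OF sec] obtain \<mu> where mu: "\<And>x. x \<noteq> 0 \<Longrightarrow> Re (\<mu> * cinner x (B *v x)) > 0" by blast
  have "axis undefined (1::complex) \<noteq> (0::complex^'n)" by (simp add: axis_eq_0_iff)
  then have mu0: "\<mu> \<noteq> 0" using mu by fastforce
  define G :: "complex^'n^'n" where "G = cdiag (\<lambda>_. \<mu>) ** B"
  have Gx: "G *v x = \<mu> *s (B *v x)" for x
    by (simp add: G_def cdiag_const_left vec_eq_iff matrix_vector_mult_def sum_distrib_left mult.assoc)
  have Gpos: "Re (cinner x (G *v x)) > 0" if "x \<noteq> 0" for x
    using mu[OF that] by (simp add: Gx cinner_scale_right)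
  from simul_diag[of G] Gpos obtain v :: "'n \<Rightarrow> complex^'n" where
    v0: "\<And>i. v i \<noteq> 0" and vo: "\<And>i j. i \<noteq> j \<Longrightarrow> cinner (v i) (G *v v j) = 0" by blast
  define V :: "complex^'n^'n" where "V = (\<chi> i j. v j $ i)"
  define \<delta> where "\<delta> k = cinner (v k) (G *v v k)" for k
  have dpos: "Re (\<delta> k) > 0" for k using Gpos[OF v0[of k]] by (simp add: \<delta>_def)
  then have d0: "\<delta> k \<noteq> 0" for k by (metis zero_complex.sel(1) less_irrefl)
  have VGV: "cadj V ** G ** V = cdiag \<delta>"
    unfolding vec_eq_iff V_def by (auto simp: sandwich cdiag_def \<delta>_def vo)
  have "(cdiag (\<lambda>k. 1 / \<delta> k) ** cadj V ** G) ** V = mat 1"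
    by (simp add: matrix_mul_assoc[symmetric] VGV[unfolded matrix_mul_assoc[symmetric]] cdiag_mult d0 cdiag_one)
  then have "invertible V" using invertible_left_inverse by blast
  then obtain L where VL: "V ** L = mat 1" and LV: "L ** V = mat 1" unfolding invertible_def by blast
  have invL: "invertible L" unfolding invertible_def using VL LV by blast
  have GL: "G = cadj L ** cdiag \<delta> ** L"
  proof -
    have "cadj L ** cdiag \<delta> ** L = (cadj L ** cadj V) ** G ** (V ** L)"
      by (simp add: VGV[symmetric] matrix_mul_assoc)
    also have "\<dots> = G" by (simp add: cadj_mult[symmetric] VL)
    finally show ?thesis by simp
  qed
  have BG: "B = cdiag (\<lambda>_. 1/\<mu>) ** G"
    by (simp add: G_def matrix_mul_assoc cdiag_mult mu0 cdiag_one)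
  define \<rho> where "\<rho> k = cmod (\<delta> k) / cmod \<mu>" for k
  define \<phi>0 where "\<phi>0 k = Arg (\<delta> k) - Arg \<mu>" for k
  have rho0: "\<rho> k > 0" for k using d0 mu0 by (simp add: \<rho>_def)
  have dmu: "\<delta> k / \<mu> = rcis (\<rho> k) (\<phi>0 k)" for k
    by (simp add: \<rho>_def \<phi>0_def rcis_divide[symmetric] rcis_cmod_Arg)
  have B1: "B = cadj L ** cdiag (\<lambda>k. \<delta> k / \<mu>) ** L"
  proof -
    have "B = (cdiag (\<lambda>_. 1/\<mu>) ** cadj L) ** cdiag \<delta> ** L" by (simp add: BG GL matrix_mul_assoc)
    also have "cdiag (\<lambda>_. 1/\<mu>) ** cadj L = cadj L ** cdiag (\<lambda>_. 1/\<mu>)"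
      by (simp add: cdiag_const_left cdiag_const_right mult.commute)
    finally show ?thesis by (simp add: matrix_mul_assoc[symmetric] cdiag_mult mult.commute)
  qed
  have "c - pi/2 < \<phi>0 k \<and> \<phi>0 k < c + pi/2" if "c = - Arg \<mu>" for c k
    using arg_half[OF dpos[of k]] that by (simp add: \<phi>0_def)
  then obtain \<phi> where ph: "\<And>k. cis (\<phi> k) = cis (\<phi>0 k)" and
    n1: "Max (range \<phi>) - Min (range \<phi>) < pi" and
    n2: "-pi < (Max (range \<phi>) + Min (range \<phi>)) / 2" and
    n3: "(Max (range \<phi>) + Min (range \<phi>)) / 2 \<le> pi"
    using phase_normalize[of "- Arg \<mu>" \<phi>0] by blast
  define sr where "sr k = complex_of_real (sqrt (\<rho> k))" for k
  define T where "T = cdiag sr ** L"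
  have invT: "invertible T" unfolding T_def
    by (intro invertible_mult invL cdiag_invertible) (simp add: sr_def rho0 less_imp_neq[symmetric])
  have "cadj T ** cdiag (\<lambda>k. cis (\<phi> k)) ** T = cadj L ** (cdiag sr ** cdiag (\<lambda>k. cis (\<phi> k)) ** cdiag sr) ** L"
  proof -
    have "(\<lambda>k. cnj (sr k)) = sr" by (rule ext) (simp add: sr_def)
    then have csr: "cadj (cdiag sr) = cdiag sr" by (simp add: cadj_cdiag)
    show ?thesis by (simp add: T_def cadj_mult csr matrix_mul_assoc)
  qed
  also have "cdiag sr ** cdiag (\<lambda>k. cis (\<phi> k)) ** cdiag sr = cdiag (\<lambda>k. \<delta> k / \<mu>)"
  proof -
    have "sr k * cis (\<phi> k) * sr k = \<delta> k / \<mu>" for k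
    proof -
      have "sr k * sr k = of_real (\<rho> k)" using rho0[of k]
        by (simp add: sr_def flip: of_real_mult)
      then show ?thesis by (simp add: dmu ph rcis_def mult_ac)
    qed
    then show ?thesis by (simp add: cdiag_mult)
  qed
  finally have "B = cadj T ** cdiag (\<lambda>k. cis (\<phi> k)) ** T" using B1 by simp
  then have "sect_decomp_phases B (Min (range \<phi>)) (Max (range \<phi>))"
    unfolding sect_decomp_phases_def using invT n1 n2 n3 by blast
  then show ?thesis by blast
qed

lemma phases_ok: assumes "sectorial (B::complex^'n::finite^'n)"
  shows "sect_decomp_phases B (phase_min B) (phase_max B)"
proof -
  from L_exist[OF assms] obtain lo hi where "sect_decomp_phases B lo hi" by blast
  then have "\<exists>p. sect_decomp_phases B (fst p) (snd p)" by (intro exI[of _ "(lo,hi)"]) simp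
  from someI_ex[OF this] show ?thesis unfolding phase_min_def phase_max_def .
qed

lemma inj_invertible: fixes M :: "complex^'n::finite^'n"
  assumes "\<And>x. M *v x = 0 \<Longrightarrow> x = 0" shows "invertible M"
proof -
  have "inj ((*v) M)"
    by (metis (no_types, lifting) assms injI eq_iff_diff_eq_0 matrix_vector_mult_diff_distrib)
  then have "det (matrix ((*v) M)) \<noteq> 0"
    using det_nz_iff_inj_gen[of "(*v) M"] by simp
  then show ?thesis by (metis invertible_det_nz matrix_of_matrix_vector_mul)
qed

theorem theorem6:
  fixes A B :: "complex^'n::finite^'n"
  assumes "sectorial A" and "sectorial B"
    and "\<exists>\<theta>. \<theta> \<in> {0..<pi} \<inter> Psi A \<and> gamma \<theta> A * sigma_max B < 1
              \<and> Psi B \<subseteq> {-pi + \<theta> <..< pi - \<theta>}"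
  shows "invertible (mat 1 + A ** B)"
proof (rule inj_invertible, rule ccontr)
  fix x0 assume x0: "(mat 1 + A ** B) *v x0 = 0" "x0 \<noteq> 0"
  from assms(3) obtain \<theta> where th: "\<theta> \<in> {0..<pi}" and g: "gamma \<theta> A * sigma_max B < 1"
    and ps: "Psi B \<subseteq> {-pi + \<theta> <..< pi - \<theta>}" by blast
  have e0: "x0 + A *v (B *v x0) = 0" using x0(1)
    by (simp add: matrix_vector_mult_add_rdistrib matrix_vector_mul_assoc)
  define y0 where "y0 = B *v x0"
  have "y0 \<noteq> 0" using e0 x0(2) y0_def by auto
  define c where "c = 1 / norm y0"
  have cpos: "c > 0" using \<open>y0 \<noteq> 0\<close> c_def by simp
  define y where "y = c *\<^sub>R y0"
  define x where "x = c *\<^sub>R x0"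
  have ny: "norm y = 1" using \<open>y0 \<noteq> 0\<close> by (simp add: y_def c_def)
  have Bx: "B *v x = y" by (simp add: x_def y_def y0_def mv_scaleR)
  have Ay: "A *v y = - x"
  proof -
    have "A *v y = c *\<^sub>R (A *v y0)" by (simp add: y_def mv_scaleR)
    also have "A *v y0 = - x0" using e0 y0_def by (simp add: eq_neg_iff_add_eq_0 add.commute)
    finally show ?thesis by (simp add: x_def)
  qed
  have "x \<noteq> 0" using x0(2) cpos by (simp add: x_def)
  define z where "z = cinner y (A *v y)"
  define h where "h = norm (A *v y)"
  have hx: "h = norm x" by (simp add: h_def Ay)
  have DW: "(Re z, Im z, h^2) \<in> DW A" unfolding DW_def z_def h_def using ny by blast
  have bdd: "bdd_above (R_ge \<theta> A)"
  proof (rule bdd_aboveI)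
    fix r assume "r \<in> R_ge \<theta> A"
    then obtain w where r: "r \<ge> 0" "r^2 = (norm (A *v w))^2" "norm w = 1"
      unfolding R_ge_def DW_def by auto
    then have "r = norm (A *v w)" using power2_eq_iff_nonneg by fastforce
    also have "\<dots> \<le> onorm ((*v) A) * norm w" by (rule onorm) simp
    finally show "r \<le> onorm ((*v) A)" using r by simp
  qed
  have sig: "norm (B *v x) \<le> sigma_max B * norm x"
    unfolding sigma_max_def by (rule onorm) simp
  have sig0: "sigma_max B \<ge> 0" unfolding sigma_max_def by (rule onorm_pos_le) simp
  show False
  proof (cases "Arg z \<in> {-\<theta><..<\<theta>}")
    case False
    have "h \<in> R_ge \<theta> A" unfolding R_ge_def using DW False h_def
      by (auto intro!: exI[of _ z])
    then have "h \<le> gamma \<theta> A" unfolding gamma_def using bdd by (rule cSup_upper)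
    have "1 = norm (B *v x)" using Bx ny by simp
    also have "\<dots> \<le> sigma_max B * h" using sig hx by simp
    also have "\<dots> \<le> sigma_max B * gamma \<theta> A" using sig0 \<open>h \<le> gamma \<theta> A\<close> by (simp add: mult_left_mono)
    finally show False using g by (simp add: mult.commute)
  next
    case True
    have "z \<in> num_range A" unfolding num_range_def z_def using ny by blast
    then have "z \<noteq> 0" using assms(1) unfolding sectorial_def by auto
    have "cinner x (B *v x) = - cnj z"
    proof -
      have "cinner x (B *v x) = cinner x y" by (simp add: Bx)
      also have "\<dots> = - cinner (A *v y) y" by (simp add: Ay cinner_def sum_negf)
      also have "cinner (A *v y) y = cnj z" by (simp add: z_def cinner_cnj)
      finally show ?thesis .
    qed
    moreover obtain \<rho> \<psi> where "\<rho> > 0" "\<psi> \<in> {phase_min B .. phase_max B}"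
      "cinner x (B *v x) = rcis \<rho> \<psi>"
      using L_cone[OF phases_ok[OF assms(2)] \<open>x \<noteq> 0\<close>] by blast
    moreover have "\<psi> \<in> Psi B" using calculation unfolding Psi_def by simp
    ultimately show False using angle_contra[OF \<open>z \<noteq> 0\<close> True, of \<psi> \<rho>] ps by force
  qed
qed

end
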